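(* Let $(M,\eta,g,\phi)$ be a contact metric manifold with metric symplectization $(M\times\mathbb{R},\omega,\bar g,J)$, and let $T$ be the O'Neill fundamental tensor of the Riemannian submersion $\pi_2:(M\times\mathbb{R},\bar g)\to(\mathbb{R},dt^2)$. Then for vector fields $X,Y$ on $M$ (tangent to the slices $M\times\{t\}$), (i) $T_XY=-\big(\bar g(X,Y)+\eta_t(X)\eta_t(Y)\big)\partial_t$; (ii) $T_X\partial_t=X+\eta_t(X)\xi_t$.
   Context: A contact metric manifold $(M,\eta,g,\phi)$: $\eta$ a contact form with Reeb field $\xi$, $g$ Riemannian with $g(X,\xi)=\eta(X)$, $\phi$ a $(1,1)$-tensor with $\phi^2=-I+\eta\otimes\xi$, $d\eta(X,Y)=g(X,\phi Y)$. Metric symplectization: $M\times\mathbb{R}$ ($t$ the coordinate) with $\omega=d(e^{2t}\eta)$, $\eta_t=e^{2t}\eta$, $\xi_t=e^{-2t}\xi$, $J$ given by $JX=\phi X$ on $\ker\eta$, $J\xi_t=\partial_t$, $J\partial_t=-\xi_t$, and $\bar g=g_t+dt^2$ with $g_t=e^{2t}g+e^{2t}(e^{2t}-1)\eta\otimes\eta$. For $\pi_2$, the vertical distribution $\mathcal{V}$ is tangent to the slices $M\times\{t\}$ and the horizontal distribution $\mathcal{H}$ is spanned by $\partial_t$. With $\bar\nabla$ the Levi-Civita connection of $\bar g$, $T_{E_1}E_2=\mathcal{H}\bar\nabla_{\mathcal{V}E_1}\mathcal{V}E_2+\mathcal{V}\bar\nabla_{\mathcal{V}E_1}\mathcal{H}E_2$.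 *)

theory Defs
  imports "HOL-Analysis.Analysis"
begin

text \<open>Everything is formulated in a chart: M is an open subset U of a Euclidean
space 'a, tangent vectors are elements of 'a; M x R is U x UNIV inside 'a x real,
with tangent vectors (u, a) :: 'a x real. Tensors are functions of the base point.\<close>

definition dirderiv :: "('a::real_normed_vector \<Rightarrow> 'b::real_normed_vector) \<Rightarrow> 'a \<Rightarrow> 'a \<Rightarrow> 'b" where
  "dirderiv f x u = frechet_derivative f (at x) u"

fun iter_dd :: "'a::real_normed_vector list \<Rightarrow> ('a \<Rightarrow> 'b::real_normed_vector) \<Rightarrow> 'a \<Rightarrow> 'b" where
  "iter_dd [] f = f"
| "iter_dd (u # us) f = (\<lambda>x. dirderiv (iter_dd us f) x u)"

definition smooth_on_chart :: "'a::real_normed_vector set \<Rightarrow> ('a \<Rightarrow> 'b::real_normed_vector) \<Rightarrow> bool" where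
  "smooth_on_chart U f \<longleftrightarrow> (\<forall>us. \<forall>x\<in>U. iter_dd us f differentiable (at x))"

text \<open>Levi-Civita connection of a metric G (G q u v = G_q(u,v)) on an open set, via the
Koszul formula: nabla_X Y = D_X Y + Gamma(X,Y).\<close>
definition christoffel ::
  "('b::real_normed_vector \<Rightarrow> 'b \<Rightarrow> 'b \<Rightarrow> real) \<Rightarrow> 'b \<Rightarrow> 'b \<Rightarrow> 'b \<Rightarrow> 'b" where
  "christoffel G q u v = (THE w. \<forall>z. G q w z =
      (dirderiv (\<lambda>r. G r v z) q u + dirderiv (\<lambda>r. G r u z) q v - dirderiv (\<lambda>r. G r u v) q z) / 2)"

definition levi_civita ::
  "('b::real_normed_vector \<Rightarrow> 'b \<Rightarrow> 'b \<Rightarrow> real) \<Rightarrow> ('b \<Rightarrow> 'b) \<Rightarrow> ('b \<Rightarrow> 'b) \<Rightarrow> 'b \<Rightarrow> 'b" where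
  "levi_civita G X Y q = dirderiv Y q (X q) + christoffel G q (X q) (Y q)"

text \<open>Exterior derivative of a 1-form (convention d eta(X,Y) = 1/2 (X eta Y - Y eta X - eta [X,Y])).\<close>
definition d_form :: "('a::real_normed_vector \<Rightarrow> 'a \<Rightarrow> real) \<Rightarrow> 'a \<Rightarrow> 'a \<Rightarrow> 'a \<Rightarrow> real" where
  "d_form \<eta> p u v = (dirderiv (\<lambda>q. \<eta> q v) p u - dirderiv (\<lambda>q. \<eta> q u) p v) / 2"

text \<open>Value of eta wedge (d eta)^n on 2n+1 vectors (up to a nonzero constant factor).\<close>
definition contact_vol :: "('a::real_normed_vector \<Rightarrow> 'a \<Rightarrow> real) \<Rightarrow> nat \<Rightarrow> 'a \<Rightarrow> (nat \<Rightarrow> 'a) \<Rightarrow> real" where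
  "contact_vol \<eta> n p v = (\<Sum>\<sigma> | \<sigma> permutes {..<2*n+1}.
      of_int (sign \<sigma>) * \<eta> p (v (\<sigma> 0)) *
      (\<Prod>i<n. d_form \<eta> p (v (\<sigma> (2*i+1))) (v (\<sigma> (2*i+2)))))"

definition contact_metric_manifold ::
  "'a::euclidean_space set \<Rightarrow> nat \<Rightarrow> ('a \<Rightarrow> 'a \<Rightarrow> real) \<Rightarrow> ('a \<Rightarrow> 'a) \<Rightarrow>
   ('a \<Rightarrow> 'a \<Rightarrow> 'a \<Rightarrow> real) \<Rightarrow> ('a \<Rightarrow> 'a \<Rightarrow> 'a) \<Rightarrow> bool" where
  "contact_metric_manifold U n \<eta> \<xi> g \<phi> \<longleftrightarrow>
     open U \<and> DIM('a) = 2*n+1 \<and>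
     (\<forall>u. smooth_on_chart U (\<lambda>p. \<eta> p u)) \<and> smooth_on_chart U \<xi> \<and>
     (\<forall>u v. smooth_on_chart U (\<lambda>p. g p u v)) \<and> (\<forall>u. smooth_on_chart U (\<lambda>p. \<phi> p u)) \<and>
     (\<forall>p\<in>U. linear (\<eta> p) \<and> linear (\<phi> p) \<and> bilinear (g p) \<and>
        (\<forall>u v. g p u v = g p v u) \<and> (\<forall>u. u \<noteq> 0 \<longrightarrow> g p u u > 0) \<and>
        (\<exists>v. contact_vol \<eta> n p v \<noteq> 0) \<and>
        \<eta> p (\<xi> p) = 1 \<and> (\<forall>u. d_form \<eta> p (\<xi> p) u = 0) \<and>
        (\<forall>u. g p u (\<xi> p) = \<eta> p u) \<and>
        (\<forall>u. \<phi> p (\<phi> p u) = - u + \<eta> p u *\<^sub>R \<xi> p) \<and>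
        (\<forall>u v. d_form \<eta> p u v = g p u (\<phi> p v)))"

definition sympl_metric :: "('a::real_normed_vector \<Rightarrow> 'a \<Rightarrow> 'a \<Rightarrow> real) \<Rightarrow> ('a \<Rightarrow> 'a \<Rightarrow> real) \<Rightarrow>
    'a \<times> real \<Rightarrow> 'a \<times> real \<Rightarrow> 'a \<times> real \<Rightarrow> real" where
  "sympl_metric g \<eta> q x y = exp (2 * snd q) * g (fst q) (fst x) (fst y)
     + exp (2 * snd q) * (exp (2 * snd q) - 1) * \<eta> (fst q) (fst x) * \<eta> (fst q) (fst y)
     + snd x * snd y"

definition eta_t :: "('a \<Rightarrow> 'a \<Rightarrow> real) \<Rightarrow> 'a \<times> real \<Rightarrow> 'a \<times> real \<Rightarrow> real" where
  "eta_t \<eta> q x = exp (2 * snd q) * \<eta> (fst q) (fst x)"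

definition xi_t :: "('a::real_vector \<Rightarrow> 'a) \<Rightarrow> 'a \<times> real \<Rightarrow> 'a \<times> real" where
  "xi_t \<xi> q = (exp (- 2 * snd q) *\<^sub>R \<xi> (fst q), 0)"

definition dt_field :: "'a \<times> real \<Rightarrow> 'a::zero \<times> real" where
  "dt_field q = (0, 1)"

definition vproj :: "'a::zero \<times> real \<Rightarrow> 'a \<times> real" where "vproj x = (fst x, 0)"
definition hproj :: "'a::zero \<times> real \<Rightarrow> 'a \<times> real" where "hproj x = (0, snd x)"

definition oneill_T :: "(('a \<times> real \<Rightarrow> 'a \<times> real) \<Rightarrow> ('a \<times> real \<Rightarrow> 'a \<times> real) \<Rightarrow> 'a \<times> real \<Rightarrow> 'a \<times> real)
   \<Rightarrow> ('a \<times> real \<Rightarrow> 'a::real_vector \<times> real) \<Rightarrow> ('a \<times> real \<Rightarrow> 'a \<times> real) \<Rightarrow> 'a \<times> real \<Rightarrow> 'a \<times> real" where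
  "oneill_T nab E1 E2 q = hproj (nab (vproj \<circ> E1) (vproj \<circ> E2) q) + vproj (nab (vproj \<circ> E1) (hproj \<circ> E2) q)"

end

theory Submission
  imports Defs
begin

lemma riesz_exists:
  fixes B :: "'b::euclidean_space \<Rightarrow> 'b \<Rightarrow> real"
  assumes l1: "\<And>w. linear (B w)" and l2: "\<And>z. linear (\<lambda>w. B w z)"
    and pd: "\<And>w. w \<noteq> 0 \<Longrightarrow> B w w > 0" and L: "linear L"
  shows "\<exists>w. \<forall>z. B w z = L z"
proof -
  define A where "A w = (\<Sum>b\<in>Basis. B w b *\<^sub>R b)" for w
  have AB: "A w \<bullet> z = B w z" for w z
  proof -
    have "B w z = B w (\<Sum>b\<in>Basis. (z \<bullet> b) *\<^sub>R b)" by (simp add: euclidean_representation)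
    also have "\<dots> = (\<Sum>b\<in>Basis. (z \<bullet> b) * B w b)"
      using l1[of w] by (simp add: linear_sum linear_scale)
    also have "\<dots> = A w \<bullet> z" unfolding A_def by (simp add: inner_sum_left inner_commute[of z] mult.commute)
    finally show ?thesis by simp
  qed
  have linA: "linear A"
    unfolding linear_iff A_def
    by (simp add: linear_add[OF l2] linear_scale[OF l2] scaleR_add_left sum.distrib scaleR_sum_right)
  have "inj A"
  proof (rule linear_injective_0[THEN iffD2, OF linA], intro allI impI)
    fix w assume "A w = 0"
    then have "B w w = 0" using AB[of w w] by simp
    then show "w = 0" using pd[of w] by (cases "w = 0") auto
  qed
  then have "surj A" using linA linear_injective_imp_surjective by blast
  define l where "l = (\<Sum>b\<in>Basis. L b *\<^sub>R b)"
  have Ll: "L z = l \<bullet> z" for z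
  proof -
    have "L z = L (\<Sum>b\<in>Basis. (z \<bullet> b) *\<^sub>R b)" by (simp add: euclidean_representation)
    also have "\<dots> = (\<Sum>b\<in>Basis. (z \<bullet> b) * L b)"
      using L by (simp add: linear_sum linear_scale)
    also have "\<dots> = l \<bullet> z" unfolding l_def by (simp add: inner_sum_left inner_commute[of z] mult.commute)
    finally show ?thesis by simp
  qed
  obtain w where "A w = l" using \<open>surj A\<close> by (metis surjD)
  then show ?thesis using AB Ll by metis
qed

lemma riesz_the:
  fixes B :: "'b::real_vector \<Rightarrow> 'b \<Rightarrow> real"
  assumes l2: "\<And>z. linear (\<lambda>w. B w z)"
    and pd: "\<And>w. w \<noteq> 0 \<Longrightarrow> B w w > 0" and w0: "\<forall>z. B w0 z = L z"
  shows "(THE w. \<forall>z. B w z = L z) = w0"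
proof (rule the_equality)
  fix w assume w: "\<forall>z. B w z = L z"
  have "B (w - w0) (w - w0) = B w (w - w0) - B w0 (w - w0)" using linear_diff[OF l2] by metis
  then have "B (w - w0) (w - w0) = 0" using w w0 by simp
  then show "w = w0" using pd[of "w - w0"] by (cases "w - w0 = 0") auto
qed (rule w0)

lemma deriv_zero_open:
  assumes "open S" "q \<in> S" "\<And>r. r \<in> S \<Longrightarrow> f r = 0"
  shows "dirderiv f q h = (0::real)"
proof -
  have "((\<lambda>_. 0::real) has_derivative (\<lambda>_. 0)) (at q)" by simp
  then have "(f has_derivative (\<lambda>_. 0)) (at q)"
    by (rule has_derivative_transform_within_open[OF _ assms(1,2)]) (use assms(3) in auto)
  then show ?thesis unfolding dirderiv_def using frechet_derivative_at by metis
qed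

lemma deriv_linear_open:
  fixes F :: "'b::real_normed_vector \<Rightarrow> 'c::real_vector \<Rightarrow> real"
  assumes "open S" "q \<in> S" "\<And>r. r \<in> S \<Longrightarrow> linear (F r)"
    and d: "\<And>z. (\<lambda>r. F r z) differentiable (at q)"
  shows "linear (\<lambda>z. dirderiv (\<lambda>r. F r z) q h)"
proof -
  define D where "D z = frechet_derivative (\<lambda>r. F r z) (at q)" for z
  have hd: "((\<lambda>r. F r z) has_derivative D z) (at q)" for z
    unfolding D_def using d[of z] frechet_derivative_works by blast
  have add: "D (z1 + z2) = (\<lambda>k. D z1 k + D z2 k)" for z1 z2
  proof -
    have "((\<lambda>r. F r z1 + F r z2) has_derivative (\<lambda>k. D z1 k + D z2 k)) (at q)"
      using has_derivative_add[OF hd hd] .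
    then have "((\<lambda>r. F r (z1 + z2)) has_derivative (\<lambda>k. D z1 k + D z2 k)) (at q)"
      by (rule has_derivative_transform_within_open[OF _ assms(1,2)]) (use assms(3) in \<open>auto simp: linear_add\<close>)
    then show ?thesis using hd has_derivative_unique by blast
  qed
  have mul: "D (c *\<^sub>R z) = (\<lambda>k. c * D z k)" for c z
  proof -
    have "((\<lambda>r. c * F r z) has_derivative (\<lambda>k. c * D z k)) (at q)"
      using has_derivative_mult_right[OF hd] .
    then have "((\<lambda>r. F r (c *\<^sub>R z)) has_derivative (\<lambda>k. c * D z k)) (at q)"
      by (rule has_derivative_transform_within_open[OF _ assms(1,2)]) (use assms(3) in \<open>auto simp: linear_scale\<close>)
    then show ?thesis using hd has_derivative_unique by blast
  qed
  show ?thesis unfolding dirderiv_def D_def[symmetric] linear_iff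
    by (simp add: add mul)
qed

lemma G_deriv:
  fixes g :: "'a::real_normed_vector \<Rightarrow> 'a \<Rightarrow> 'a \<Rightarrow> real" and \<eta> :: "'a \<Rightarrow> 'a \<Rightarrow> real"
  assumes dg: "(\<lambda>p. g p a b) differentiable (at (fst q))"
    and da: "(\<lambda>p. \<eta> p a) differentiable (at (fst q))"
    and db: "(\<lambda>p. \<eta> p b) differentiable (at (fst q))"
  shows "(\<lambda>r. sympl_metric g \<eta> r (a,\<alpha>) (b,\<beta>)) differentiable (at q)"
    and "dirderiv (\<lambda>r. sympl_metric g \<eta> r (a,\<alpha>) (b,\<beta>)) q (0,1) =
          2*exp(2* snd q)*g (fst q) a b + (4*exp(4* snd q) - 2*exp(2* snd q)) * \<eta> (fst q) a * \<eta> (fst q) b"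
proof -
  obtain Dg where Dg: "((\<lambda>p. g p a b) has_derivative Dg) (at (fst q))" using dg differentiable_def by blast
  obtain Da where Da: "((\<lambda>p. \<eta> p a) has_derivative Da) (at (fst q))" using da differentiable_def by blast
  obtain Db where Db: "((\<lambda>p. \<eta> p b) has_derivative Db) (at (fst q))" using db differentiable_def by blast
  have fstd: "(fst has_derivative fst) (at q)"
    by (simp add: bounded_linear_fst bounded_linear_imp_has_derivative)
  have Dg': "((\<lambda>r. g (fst r) a b) has_derivative (\<lambda>h. Dg (fst h))) (at q)"
    using has_derivative_compose[OF fstd Dg] by simp
  have Da': "((\<lambda>r. \<eta> (fst r) a) has_derivative (\<lambda>h. Da (fst h))) (at q)"
    using has_derivative_compose[OF fstd Da] by simp
  have Db': "((\<lambda>r. \<eta> (fst r) b) has_derivative (\<lambda>h. Db (fst h))) (at q)"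
    using has_derivative_compose[OF fstd Db] by simp
  have ex: "((\<lambda>r. exp (2 * snd r)) has_derivative (\<lambda>h. exp (2 * snd q) * (2 * snd h))) (at q)"
    by (auto intro!: derivative_eq_intros)
  define D where "D h = exp (2 * snd q) * (2 * snd h) * g (fst q) a b + exp (2 * snd q) * Dg (fst h)
     + ((exp (2 * snd q) * (2 * snd h)) * (exp (2 * snd q) - 1) + exp (2 * snd q) * (exp (2 * snd q) * (2 * snd h)))
        * \<eta> (fst q) a * \<eta> (fst q) b
     + exp (2 * snd q) * (exp (2 * snd q) - 1) * (Da (fst h) * \<eta> (fst q) b + \<eta> (fst q) a * Db (fst h))" for h
  have hd: "((\<lambda>r. sympl_metric g \<eta> r (a,\<alpha>) (b,\<beta>)) has_derivative D) (at q)"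
    unfolding sympl_metric_def fst_conv snd_conv
    apply (rule has_derivative_eq_rhs)
     apply (rule has_derivative_add has_derivative_mult has_derivative_diff has_derivative_const ex Dg' Da' Db')+
    apply (simp add: D_def algebra_simps fun_eq_iff)
    done
  then show "(\<lambda>r. sympl_metric g \<eta> r (a,\<alpha>) (b,\<beta>)) differentiable (at q)" using differentiable_def by blast
  have "Dg 0 = 0" "Da 0 = 0" "Db 0 = 0" using Dg Da Db has_derivative_linear linear_0 by blast+
  then have "D (0,1) = 2*exp(2* snd q)*g (fst q) a b + (4*exp(4* snd q) - 2*exp(2* snd q)) * \<eta> (fst q) a * \<eta> (fst q) b"
    unfolding D_def by (simp add: algebra_simps mult_exp_exp)
  then show "dirderiv (\<lambda>r. sympl_metric g \<eta> r (a,\<alpha>) (b,\<beta>)) q (0,1) =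
          2*exp(2 * snd q)*g (fst q) a b + (4*exp(4 * snd q) - 2*exp(2 * snd q)) * \<eta> (fst q) a * \<eta> (fst q) b"
    unfolding dirderiv_def using frechet_derivative_at[OF hd] by metis
qed

lemma deriv_const_open:
  fixes c :: "'c::real_normed_vector"
  assumes "open S" "q \<in> S" "\<And>r. r \<in> S \<Longrightarrow> f r = c"
  shows "dirderiv f q h = 0"
proof -
  have "((\<lambda>_. c) has_derivative (\<lambda>_. 0)) (at q)" by simp
  then have "(f has_derivative (\<lambda>_. 0)) (at q)"
    by (rule has_derivative_transform_within_open[OF _ assms(1,2)]) (use assms(3) in auto)
  then show ?thesis unfolding dirderiv_def using frechet_derivative_at by metis
qed

lemma dirderiv_const: "dirderiv (\<lambda>_. c) q h = (0::'b::real_normed_vector)"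
proof -
  have "((\<lambda>_. c) has_derivative (\<lambda>_. 0)) (at q)" by simp
  then show ?thesis unfolding dirderiv_def using frechet_derivative_at by metis
qed

lemma dirderiv_zero_dir:
  assumes "f differentiable (at q)"
  shows "dirderiv f q 0 = 0"
  using assms unfolding dirderiv_def
  by (meson frechet_derivative_works has_derivative_linear linear_0)

lemma snd_dirderiv_vproj:
  fixes Y :: "'b::real_normed_vector \<Rightarrow> 'a::real_normed_vector \<times> real"
  assumes "Y differentiable (at q)"
  shows "snd (dirderiv (vproj \<circ> Y) q h) = 0"
proof -
  obtain D where D: "(Y has_derivative D) (at q)" using assms differentiable_def by blast
  have "((\<lambda>r. (fst (Y r), 0::real)) has_derivative (\<lambda>h. (fst (D h), 0))) (at q)"
    by (intro has_derivative_Pair has_derivative_fst[OF D] has_derivative_const)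
  then have "((vproj \<circ> Y) has_derivative (\<lambda>h. (fst (D h), 0))) (at q)"
    by (simp add: vproj_def o_def)
  then show ?thesis unfolding dirderiv_def using frechet_derivative_at by (metis snd_conv)
qed

lemma G_lin:
  assumes "linear (\<eta> (fst r))" "bilinear (g (fst r))"
  shows "linear (\<lambda>y. sympl_metric g \<eta> r x y)" "linear (\<lambda>x. sympl_metric g \<eta> r x y)"
  using assms unfolding linear_iff sympl_metric_def
  by (auto simp: bilinear_ladd bilinear_radd bilinear_lmul bilinear_rmul algebra_simps)

lemma cs:
  fixes g :: "'a::real_normed_vector \<Rightarrow> 'a \<Rightarrow> 'a \<Rightarrow> real" and \<eta> :: "'a \<Rightarrow> 'a \<Rightarrow> real"
  assumes bl: "bilinear (g p)" and sym: "\<forall>u v. g p u v = g p v u" and pd: "\<forall>u. u \<noteq> 0 \<longrightarrow> g p u u > 0"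
    and ln: "linear (\<eta> p)" and gx: "\<forall>u. g p u (\<xi> p) = \<eta> p u" and ex: "\<eta> p (\<xi> p) = 1"
  shows "(\<eta> p a)^2 \<le> g p a a"
proof -
  define k where "k = \<eta> p a"
  have "0 \<le> g p (a - k *\<^sub>R \<xi> p) (a - k *\<^sub>R \<xi> p)"
    using pd by (cases "a - k *\<^sub>R \<xi> p = 0") (auto simp: bilinear_lzero[OF bl] intro: less_imp_le)
  also have "\<dots> = g p a a - k * g p a (\<xi> p) - k * g p (\<xi> p) a + k*k * g p (\<xi> p) (\<xi> p)"
    using bl by (simp add: bilinear_lsub bilinear_rsub bilinear_lmul bilinear_rmul algebra_simps)
  also have "\<dots> = g p a a - k^2" using sym gx ex unfolding k_def by (simp add: power2_eq_square)
  finally show ?thesis unfolding k_def by simp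
qed

lemma G_pd:
  fixes g :: "'a::real_normed_vector \<Rightarrow> 'a \<Rightarrow> 'a \<Rightarrow> real" and \<eta> :: "'a \<Rightarrow> 'a \<Rightarrow> real"
  assumes bl: "bilinear (g (fst r))" and sym: "\<forall>u v. g (fst r) u v = g (fst r) v u"
    and pd: "\<forall>u. u \<noteq> 0 \<longrightarrow> g (fst r) u u > 0"
    and ln: "linear (\<eta> (fst r))" and gx: "\<forall>u. g (fst r) u (\<xi> (fst r)) = \<eta> (fst r) u"
    and ex: "\<eta> (fst r) (\<xi> (fst r)) = 1" and w: "w \<noteq> 0"
  shows "sympl_metric g \<eta> r w w > 0"
proof -
  obtain a s where ws: "w = (a, s)" by (cases w)
  define e where "e = exp (2 * snd r)"
  have e: "e > 0" unfolding e_def by simp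
  have c: "(\<eta> (fst r) a)^2 \<le> g (fst r) a a" using cs[where p="fst r" and g=g and \<eta>=\<eta> and \<xi>=\<xi>] bl sym pd ln gx ex by blast
  have G: "sympl_metric g \<eta> r w w = e * (g (fst r) a a - (\<eta> (fst r) a)^2) + e*e*(\<eta> (fst r) a)^2 + s * s"
    unfolding sympl_metric_def ws e_def[symmetric] by (simp add: algebra_simps power2_eq_square)
  show ?thesis
  proof (cases "a = 0")
    case True
    then have "s \<noteq> 0" using w ws by (auto simp: zero_prod_def)
    then show ?thesis unfolding G using True ln by (auto simp add: linear_0 bilinear_lzero[OF bl] zero_less_mult_iff)
  next
    case False
    then have ga: "g (fst r) a a > 0" using pd by auto
    show ?thesis
    proof (cases "\<eta> (fst r) a = 0")
      case True then show ?thesis unfolding G using ga e by (simp add: add_pos_nonneg)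
    next
      case False
      have "e*e*(\<eta> (fst r) a)^2 > 0" using e False by simp
      moreover have "e * (g (fst r) a a - (\<eta> (fst r) a)^2) \<ge> 0" using e c by simp
      ultimately show ?thesis unfolding G by (simp add: add_nonneg_pos add_pos_nonneg)
    qed
  qed
qed

theorem lemma4p1:
  fixes U :: "'a::euclidean_space set" and n :: nat
    and \<eta> :: "'a \<Rightarrow> 'a \<Rightarrow> real" and \<xi> :: "'a \<Rightarrow> 'a"
    and g :: "'a \<Rightarrow> 'a \<Rightarrow> 'a \<Rightarrow> real" and \<phi> :: "'a \<Rightarrow> 'a \<Rightarrow> 'a"
    and X Y :: "'a \<times> real \<Rightarrow> 'a \<times> real"
  assumes cm: "contact_metric_manifold U n \<eta> \<xi> g \<phi>"
    and X: "smooth_on_chart (U \<times> UNIV) X" "\<forall>q\<in>U \<times> UNIV. snd (X q) = 0"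
    and Y: "smooth_on_chart (U \<times> UNIV) Y" "\<forall>q\<in>U \<times> UNIV. snd (Y q) = 0"
  shows "\<forall>q\<in>U \<times> UNIV.
           oneill_T (levi_civita (sympl_metric g \<eta>)) X Y q =
             (- (sympl_metric g \<eta> q (X q) (Y q) + eta_t \<eta> q (X q) * eta_t \<eta> q (Y q))) *\<^sub>R dt_field q
         \<and> oneill_T (levi_civita (sympl_metric g \<eta>)) X dt_field q =
             X q + eta_t \<eta> q (X q) *\<^sub>R xi_t \<xi> q"
proof
  fix q :: "'a \<times> real" assume q: "q \<in> U \<times> UNIV"
  define S where "S = U \<times> (UNIV :: real set)"
  define G where "G = sympl_metric g \<eta>"
  define p where "p = fst q"
  define t where "t = snd q"
  have cmu: "open U" "\<And>u. smooth_on_chart U (\<lambda>p. \<eta> p u)" "\<And>u v. smooth_on_chart U (\<lambda>p. g p u v)"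
    and cmp: "\<And>p. p \<in> U \<Longrightarrow> linear (\<eta> p) \<and> bilinear (g p) \<and>
        (\<forall>u v. g p u v = g p v u) \<and> (\<forall>u. u \<noteq> 0 \<longrightarrow> g p u u > 0) \<and>
        \<eta> p (\<xi> p) = 1 \<and> (\<forall>u. g p u (\<xi> p) = \<eta> p u)"
    using cm unfolding contact_metric_manifold_def by auto
  have S: "open S" "q \<in> S" using q cmu(1) unfolding S_def by (auto intro: open_Times)
  have pU: "p \<in> U" using q p_def by auto
  have rS: "\<And>r. r \<in> S \<Longrightarrow> fst r \<in> U" unfolding S_def by auto
  have dg: "\<And>a b. (\<lambda>p. g p a b) differentiable (at p)"
    using cmu(3) pU unfolding smooth_on_chart_def by (metis iter_dd.simps(1))
  have de: "\<And>a. (\<lambda>p. \<eta> p a) differentiable (at p)"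
    using cmu(2) pU unfolding smooth_on_chart_def by (metis iter_dd.simps(1))
  have Gd: "\<And>a \<alpha> b \<beta>. (\<lambda>r. G r (a,\<alpha>) (b,\<beta>)) differentiable (at q)"
    unfolding G_def using G_deriv(1) dg de p_def by blast
  have Gd': "\<And>v z. (\<lambda>r. G r v z) differentiable (at q)"
    using Gd by (metis prod.collapse)
  have Gt: "\<And>a \<alpha> b \<beta>. dirderiv (\<lambda>r. G r (a,\<alpha>) (b,\<beta>)) q (0,1) =
          2*exp(2 * t)*g p a b + (4*exp(4 * t) - 2*exp(2 * t)) * \<eta> p a * \<eta> p b"
    unfolding G_def t_def using G_deriv(2) dg de p_def by blast
  have linr: "\<And>r x. r \<in> S \<Longrightarrow> linear (\<lambda>y. G r x y)" and linl: "\<And>r y. r \<in> S \<Longrightarrow> linear (\<lambda>x. G r x y)"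
    unfolding G_def using G_lin cmp rS by blast+
  have pd: "\<And>w. w \<noteq> 0 \<Longrightarrow> G q w w > 0"
    unfolding G_def using G_pd[of g q \<eta> \<xi>] cmp[OF pU] p_def by blast
  have Gq_l2: "\<And>z. linear (\<lambda>w. G q w z)" using linl S by blast
  have Gq_l1: "\<And>w. linear (G q w)" using linr S by blast
  have cp: "p \<in> U \<Longrightarrow> True" by simp
  note pfacts = cmp[OF pU]
  have Gexp: "G q (a, \<alpha>) (b, \<beta>) = exp (2*t) * g p a b + exp (2*t) * (exp (2*t) - 1) * \<eta> p a * \<eta> p b + \<alpha> * \<beta>"
    for a \<alpha> b \<beta> unfolding G_def sympl_metric_def p_def t_def by simp
  have e4: "exp (4 * t) = exp (2*t) * exp (2*t)" by (simp add: mult_exp_exp)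
  have Gvert: "\<And>r a \<beta>. r \<in> S \<Longrightarrow> G r (a, 0) (0, \<beta>) = 0"
    unfolding G_def sympl_metric_def using cmp rS by (simp add: linear_0 bilinear_rzero)
  have Gvert': "\<And>r a \<beta>. r \<in> S \<Longrightarrow> G r (0, \<beta>) (a, 0) = 0"
    unfolding G_def sympl_metric_def using cmp rS by (simp add: linear_0 bilinear_lzero)
  obtain a where a: "X q = (a, 0)" using X(2) q by (metis prod.collapse)
  obtain b where b: "Y q = (b, 0)" using Y(2) q by (metis prod.collapse)
  have Xd: "X differentiable (at q)" and Yd: "Y differentiable (at q)"
    using X(1) Y(1) q unfolding smooth_on_chart_def by (metis iter_dd.simps(1))+
  have vX: "(vproj \<circ> X) q = (a, 0)" and vY: "(vproj \<circ> Y) q = (b, 0)" using a b by (simp_all add: vproj_def)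
  define L where "L z = (dirderiv (\<lambda>r. G r (b,0) z) q (a,0) + dirderiv (\<lambda>r. G r (a,0) z) q (b,0)
      - dirderiv (\<lambda>r. G r (a,0) (b,0)) q z) / 2" for z
  have l1: "linear (\<lambda>z. dirderiv (\<lambda>r. G r (b,0) z) q (a,0))"
    by (rule deriv_linear_open[OF S]) (use linr Gd' in auto)
  have l2: "linear (\<lambda>z. dirderiv (\<lambda>r. G r (a,0) z) q (b,0))"
    by (rule deriv_linear_open[OF S]) (use linr Gd' in auto)
  have l3: "linear (\<lambda>z. dirderiv (\<lambda>r. G r (a,0) (b,0)) q z)"
    unfolding dirderiv_def using Gd' frechet_derivative_works has_derivative_linear by blast
  have La: "L (x + y) = L x + L y" for x y
    using linear_add[OF l1, of x y] linear_add[OF l2, of x y] linear_add[OF l3, of x y]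
    unfolding L_def by (simp only:) (simp add: field_simps)
  have Lm: "L (c *\<^sub>R x) = c *\<^sub>R L x" for c x
    using linear_scale[OF l1, of c x] linear_scale[OF l2, of c x] linear_scale[OF l3, of c x]
    unfolding L_def by (simp only:) (simp add: field_simps)
  have linL: "linear L" unfolding linear_iff using La Lm by blast
  obtain w where w: "\<forall>z. G q w z = L z" using riesz_exists[OF Gq_l1 Gq_l2 pd linL] by blast
  have chw: "christoffel G q (a,0) (b,0) = w"
    unfolding christoffel_def L_def[symmetric] by (rule riesz_the[OF Gq_l2 pd w])
  have "snd w = G q w (0,1)"
    using pfacts unfolding G_def sympl_metric_def by (simp add: linear_0 bilinear_rzero bilinear_lzero p_def[symmetric])
  also have "\<dots> = L (0,1)" using w by simp
  also have "\<dots> = - (exp(2*t) * g p a b + (2*exp(4*t) - exp(2*t)) * \<eta> p a * \<eta> p b)"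
  proof -
    have "dirderiv (\<lambda>r. G r (b,0) (0,1)) q (a,0) = 0"
      by (rule deriv_const_open[where c="0::real", OF S]) (use Gvert in auto)
    moreover have "dirderiv (\<lambda>r. G r (a,0) (0,1)) q (b,0) = 0"
      by (rule deriv_const_open[where c="0::real", OF S]) (use Gvert in auto)
    ultimately show ?thesis unfolding L_def Gt by (simp add: field_simps)
  qed
  finally have sw: "snd w = - (exp(2*t) * g p a b + (2*exp(4*t) - exp(2*t)) * \<eta> p a * \<eta> p b)" .
  have G00: "\<And>r z. r \<in> S \<Longrightarrow> G r (0,0) z = 0"
  proof -
    fix r z assume "r \<in> S"
    then have "linear (\<lambda>x. G r x z)" by (rule linl)
    then show "G r (0,0) z = 0" using linear_0 by (metis zero_prod_def)
  qed
  have G00': "\<And>r v. r \<in> S \<Longrightarrow> G r v (0,0) = 0"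
  proof -
    fix r v assume "r \<in> S"
    then have "linear (\<lambda>x. G r v x)" by (rule linr)
    then show "G r v (0,0) = 0" using linear_0 by (metis zero_prod_def)
  qed
  have c0w: "\<forall>z. G q 0 z = (dirderiv (\<lambda>r. G r (0,0) z) q (a,0) + dirderiv (\<lambda>r. G r (a,0) z) q (0,0) - dirderiv (\<lambda>r. G r (a,0) (0,0)) q z) / 2"
  proof
    fix z :: "'a \<times> real"
    have "dirderiv (\<lambda>r. G r (0,0) z) q (a,0) = 0"
      by (rule deriv_const_open[where c="0::real", OF S]) (use G00 in auto)
    moreover have "dirderiv (\<lambda>r. G r (a,0) z) q (0,0) = 0"
      using dirderiv_zero_dir[OF Gd'] by (simp add: zero_prod_def)
    moreover have "dirderiv (\<lambda>r. G r (a,0) (0,0)) q z = 0"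
      by (rule deriv_const_open[where c="0::real", OF S]) (use G00' in auto)
    moreover have "G q 0 z = 0" using Gq_l2 linear_0 by blast
    ultimately show "G q 0 z = (dirderiv (\<lambda>r. G r (0,0) z) q (a,0) + dirderiv (\<lambda>r. G r (a,0) z) q (0,0) - dirderiv (\<lambda>r. G r (a,0) (0,0)) q z) / 2"
      by simp
  qed
  have c0: "christoffel G q (a,0) (0,0) = 0"
    unfolding christoffel_def by (rule riesz_the[OF Gq_l2 pd c0w])
  have part1: "oneill_T (levi_civita G) X Y q =
             (- (G q (X q) (Y q) + eta_t \<eta> q (X q) * eta_t \<eta> q (Y q))) *\<^sub>R dt_field q"
  proof -
    have "snd (dirderiv (vproj \<circ> Y) q (a, 0)) = 0" by (rule snd_dirderiv_vproj[OF Yd])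
    moreover have "dirderiv (hproj \<circ> Y) q (a, 0) = 0"
      by (rule deriv_const_open[where c = "(0, 0)", OF S]) (use Y(2) in \<open>auto simp: S_def hproj_def\<close>)
    moreover have "(hproj \<circ> Y) q = (0, 0)" using b by (simp add: hproj_def)
    moreover have e4': "exp (t * 4) = exp (t * 2) * exp (t * 2)" by (simp add: mult_exp_exp)
    ultimately show ?thesis
      unfolding oneill_T_def levi_civita_def vX vY chw
      by (simp add: hproj_def vproj_def dt_field_def sw a b Gexp eta_t_def p_def[symmetric] t_def[symmetric] e4 e4' c0 algebra_simps)
  qed
  define w0 where "w0 = (a + \<eta> p a *\<^sub>R \<xi> p, 0::real)"
  have c1w: "\<forall>z. G q w0 z = (dirderiv (\<lambda>r. G r (0,1) z) q (a,0) + dirderiv (\<lambda>r. G r (a,0) z) q (0,1) - dirderiv (\<lambda>r. G r (a,0) (0,1)) q z) / 2"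
  proof
    fix z :: "'a \<times> real"
    obtain c s where z: "z = (c, s)" by (cases z)
    have d1: "dirderiv (\<lambda>r. G r (0,1) z) q (a,0) = 0"
      by (rule deriv_const_open[where c = s, OF S]) (use cmp rS in \<open>auto simp: z G_def sympl_metric_def linear_0 bilinear_lzero\<close>)
    have d3: "dirderiv (\<lambda>r. G r (a,0) (0,1)) q z = 0"
      by (rule deriv_const_open[where c="0::real", OF S]) (use Gvert in auto)
    have "G q w0 z = exp (2*t) * g p a c + (2*exp(4*t) - exp(2*t)) * \<eta> p a * \<eta> p c"
    proof -
      have bl: "bilinear (g p)" and ln: "linear (\<eta> p)" and sy: "g p (\<xi> p) c = \<eta> p c" and ex: "\<eta> p (\<xi> p) = 1"
        using pfacts by auto
      have gl: "g p (a + \<eta> p a *\<^sub>R \<xi> p) c = g p a c + \<eta> p a * \<eta> p c"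
        using bl sy by (simp add: bilinear_ladd bilinear_lmul)
      have el: "\<eta> p (a + \<eta> p a *\<^sub>R \<xi> p) = 2 * \<eta> p a"
        using ln ex by (simp add: linear_add linear_scale)
      have e4': "exp (t * 4) = exp (t * 2) * exp (t * 2)" by (simp add: mult_exp_exp)
      show ?thesis unfolding w0_def z Gexp gl el by (simp add: e4 e4' algebra_simps)
    qed
    then show "G q w0 z = (dirderiv (\<lambda>r. G r (0,1) z) q (a,0) + dirderiv (\<lambda>r. G r (a,0) z) q (0,1) - dirderiv (\<lambda>r. G r (a,0) (0,1)) q z) / 2"
      unfolding d1 d3 unfolding z Gt by (simp add: field_simps)
  qed
  have c1: "christoffel G q (a,0) (0,1) = w0"
    unfolding christoffel_def by (rule riesz_the[OF Gq_l2 pd c1w])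
  have part2: "oneill_T (levi_civita G) X dt_field q = X q + eta_t \<eta> q (X q) *\<^sub>R xi_t \<xi> q"
  proof -
    have h1: "vproj \<circ> dt_field = (\<lambda>_. (0::'a, 0::real))" by (simp add: fun_eq_iff vproj_def dt_field_def)
    have h2: "hproj \<circ> dt_field = (\<lambda>_. (0::'a, 1::real))" by (simp add: fun_eq_iff hproj_def dt_field_def)
    show ?thesis
      unfolding oneill_T_def levi_civita_def h1 h2 vX c0 c1 dirderiv_const
      by (simp add: hproj_def vproj_def w0_def a eta_t_def xi_t_def p_def[symmetric] t_def[symmetric] mult_exp_exp)
  qed
  show "oneill_T (levi_civita (sympl_metric g \<eta>)) X Y q =
             (- (sympl_metric g \<eta> q (X q) (Y q) + eta_t \<eta> q (X q) * eta_t \<eta> q (Y q))) *\<^sub>R dt_field q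
         \<and> oneill_T (levi_civita (sympl_metric g \<eta>)) X dt_field q =
             X q + eta_t \<eta> q (X q) *\<^sub>R xi_t \<xi> q"
    using part1 part2 unfolding G_def by simp
qed

end
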